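(* For every directed acyclic graph $D$ with distinct nodes $s,t$ and costs $c:E(D)\to\mathbb{R}_+$, the following holds. The minimum cost of an integral solution of the odd path blocker LP $$\min\Big\{\sum_{e\in E(D)}c(e)x_e : \sum_{e\in P}x_e\ge1 \text{ for every odd-length } s\rightarrow t \text{ path } P \text{ in } D,\ x\ge0\Big\}$$ is at most twice the LP optimum. That is, the integrality gap of the odd path blocker LP in DAGs is at most $2$.
   Context: Paths are simple directed paths; odd-length means an odd number of edges. Integral solutions are the $0/1$ vectors $x$ satisfying the path constraints. *)

theory Defs
  imports Complex_Main
begin

text \<open>A finite directed acyclic graph: finite vertex set V, edge set E of ordered pairs
  (no parallel edges), with no directed cycle (acyclic also excludes self-loops).\<close>
definition dag :: "'a set \<Rightarrow> ('a \<times> 'a) set \<Rightarrow> bool" where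
  "dag V E \<longleftrightarrow> finite V \<and> E \<subseteq> V \<times> V \<and> acyclic E"

definition path_edges :: "'a list \<Rightarrow> ('a \<times> 'a) set" where
  "path_edges vs = set (zip vs (tl vs))"

definition is_st_path :: "'a set \<Rightarrow> ('a \<times> 'a) set \<Rightarrow> 'a \<Rightarrow> 'a \<Rightarrow> 'a list \<Rightarrow> bool" where
  "is_st_path V E s t vs \<longleftrightarrow> vs \<noteq> [] \<and> distinct vs \<and> set vs \<subseteq> V \<and>
     hd vs = s \<and> last vs = t \<and> path_edges vs \<subseteq> E"

definition odd_st_path :: "'a set \<Rightarrow> ('a \<times> 'a) set \<Rightarrow> 'a \<Rightarrow> 'a \<Rightarrow> 'a list \<Rightarrow> bool" where
  "odd_st_path V E s t vs \<longleftrightarrow> is_st_path V E s t vs \<and> odd (length vs - 1)"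

definition opb_feasible :: "'a set \<Rightarrow> ('a \<times> 'a) set \<Rightarrow> 'a \<Rightarrow> 'a \<Rightarrow> (('a \<times> 'a) \<Rightarrow> real) \<Rightarrow> bool" where
  "opb_feasible V E s t x \<longleftrightarrow> (\<forall>e\<in>E. x e \<ge> 0) \<and>
     (\<forall>P. odd_st_path V E s t P \<longrightarrow> (\<Sum>e\<in>path_edges P. x e) \<ge> 1)"

definition opb_integral :: "'a set \<Rightarrow> ('a \<times> 'a) set \<Rightarrow> 'a \<Rightarrow> 'a \<Rightarrow> (('a \<times> 'a) \<Rightarrow> real) \<Rightarrow> bool" where
  "opb_integral V E s t x \<longleftrightarrow> opb_feasible V E s t x \<and> (\<forall>e\<in>E. x e \<in> {0, 1})"

definition lp_cost :: "('a \<times> 'a) set \<Rightarrow> (('a \<times> 'a) \<Rightarrow> real) \<Rightarrow> (('a \<times> 'a) \<Rightarrow> real) \<Rightarrow> real" where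
  "lp_cost E c x = (\<Sum>e\<in>E. c e * x e)"

definition opb_lp_opt where
  "opb_lp_opt V E s t c = Inf {lp_cost E c x | x. opb_feasible V E s t x}"

definition opb_int_opt where
  "opb_int_opt V E s t c = Inf {lp_cost E c x | x. opb_integral V E s t x}"

end

theory Submission imports Defs "HOL-Analysis.Analysis" begin

lemma pe_cons2: "path_edges (a#b#r) = insert (a,b) (path_edges (b#r))"
  by (simp add: path_edges_def)
lemma pe_single: "path_edges [a] = {}"
  by (simp add: path_edges_def)
lemma pe_mem: "(u,w)\<in>path_edges P \<Longrightarrow> u \<in> set P \<and> w \<in> set P"
  unfolding path_edges_def
  by (metis in_set_zipE list.set_sel(2) tl_Nil)
lemma pe_snoc: "P \<noteq> [] \<Longrightarrow> path_edges (P@[b]) = insert (last P, b) (path_edges P)"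
proof (induction P)
  case Nil then show ?case by simp
next
  case (Cons a P')
  then show ?case
    by (cases P') (auto simp: pe_cons2 pe_single)
qed
lemma pe_finite: "finite (path_edges P)" by (simp add: path_edges_def)

lemma reach: "path_edges P \<subseteq> E \<Longrightarrow> b \<in> set P \<Longrightarrow> (b, last P) \<in> E\<^sup>*"
proof (induction P arbitrary: b)
  case Nil then show ?case by simp
next
  case (Cons a P')
  show ?case
  proof (cases P')
    case Nil then show ?thesis using Cons by simp
  next
    case (Cons a2 r)
    have e: "(a, a2) \<in> E" and sub: "path_edges P' \<subseteq> E" using Cons.prems Cons by (auto simp: pe_cons2)
    have "(a2, last P') \<in> E\<^sup>*" using Cons.IH[OF sub, of a2] Cons by simp
    then have "(a, last P') \<in> E\<^sup>*" using e by (meson converse_rtrancl_into_rtrancl)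
    then show ?thesis using Cons.IH[OF sub] Cons.prems Cons by auto
  qed
qed

lemma nth_edge: "Suc i < length P \<Longrightarrow> (P!i, P!Suc i) \<in> path_edges P"
  unfolding path_edges_def set_zip by (auto simp: nth_tl intro!: exI[of _ i])

lemma cross: "(f::nat\<Rightarrow>real) 0 < th \<Longrightarrow> th \<le> f k \<Longrightarrow> \<exists>i<k. f i < th \<and> th \<le> f (Suc i)"
proof (induction k)
  case 0 then show ?case by simp
next
  case (Suc k)
  then show ?case
    by (cases "f k < th") (auto, meson less_SucI not_le)
qed

lemma meas_Ioc: "measure lborel {l<..u::real} \<le> max 0 (u - l)"
  by (cases "l \<le> u") auto
lemma fin_Ioc: "emeasure lborel {l<..u::real} < \<infinity>"
  by (cases "l \<le> u") auto


definition plen :: "(('a\<times>'a)\<Rightarrow>real) \<Rightarrow> 'a list \<Rightarrow> real" where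
  "plen x P = (\<Sum>e\<in>path_edges P. x e)"

definition dd where
  "dd V E s x v q = Inf (insert 1 {plen x P | P. is_st_path V E s v P \<and> odd (length P - 1) = q})"

lemma plen_nonneg: "\<forall>e\<in>E. x e \<ge> 0 \<Longrightarrow> path_edges P \<subseteq> E \<Longrightarrow> plen x P \<ge> 0"
  unfolding plen_def by (intro sum_nonneg) auto

lemma dd_bdd: "\<forall>e\<in>E. x e \<ge> 0 \<Longrightarrow> bdd_below (insert 1 {plen x P | P. is_st_path V E s v P \<and> odd (length P - 1) = q})"
  by (rule bdd_belowI[of _ 0]) (auto simp: is_st_path_def intro: plen_nonneg)

lemma dd_le1: "\<forall>e\<in>E. x e \<ge> 0 \<Longrightarrow> dd V E s x v q \<le> 1"
  unfolding dd_def by (rule cInf_lower[OF _ dd_bdd]) auto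

lemma dd_le_path: "\<forall>e\<in>E. x e \<ge> 0 \<Longrightarrow> is_st_path V E s v P \<Longrightarrow> odd (length P - 1) = q \<Longrightarrow> dd V E s x v q \<le> plen x P"
  unfolding dd_def by (rule cInf_lower[OF _ dd_bdd]) auto

lemma dd_s: "\<forall>e\<in>E. x e \<ge> 0 \<Longrightarrow> s \<in> V \<Longrightarrow> dd V E s x s False \<le> 0"
  using dd_le_path[of E x V s s "[s]" False]
  by (simp add: is_st_path_def pe_single plen_def)

lemma dd_t: "opb_feasible V E s t x \<Longrightarrow> dd V E s x t True \<ge> 1"
  unfolding dd_def
  by (rule cInf_greatest) (auto simp: opb_feasible_def odd_st_path_def plen_def)

lemma dd_tri:
  assumes dag: "dag V E" and x: "\<forall>e\<in>E. x e \<ge> 0" and ab: "(a,b) \<in> E"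
  shows "dd V E s x b (\<not>p) \<le> dd V E s x a p + x (a,b)"
proof -
  have "dd V E s x b (\<not>p) - x (a,b) \<le> dd V E s x a p"
    unfolding dd_def[of V E s x a p]
  proof (rule cInf_greatest)
    fix z assume "z \<in> insert 1 {plen x P | P. is_st_path V E s a P \<and> odd (length P - 1) = p}"
    then show "dd V E s x b (\<not>p) - x (a,b) \<le> z"
    proof
      assume "z = 1" then show ?thesis using dd_le1[OF x, of V s b "\<not>p"] x ab by force
    next
      assume "z \<in> {plen x P | P. is_st_path V E s a P \<and> odd (length P - 1) = p}"
      then obtain P where z: "z = plen x P" and P: "is_st_path V E s a P" and par: "odd (length P - 1) = p"
        by auto
      have ne: "P \<noteq> []" and la: "last P = a" and pe: "path_edges P \<subseteq> E" using P by (auto simp: is_st_path_def)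
      have bn: "b \<notin> set P"
      proof
        assume "b \<in> set P"
        then have "(b,a) \<in> E\<^sup>*" using reach[OF pe] la by auto
        then have "(b,b) \<in> E\<^sup>+" using ab by (meson rtrancl_into_trancl1)
        then show False using dag by (auto simp: dag_def acyclic_def)
      qed
      have bV: "b \<in> V" using dag ab by (auto simp: dag_def)
      have Q: "is_st_path V E s b (P@[b])" using P bn bV ab ne la
        by (auto simp: is_st_path_def pe_snoc)
      have parQ: "odd (length (P@[b]) - 1) = (\<not>p)" using par ne by (cases P) auto
      have nin: "(a,b) \<notin> path_edges P" using bn pe_mem[of a b P] by blast
      have "plen x (P@[b]) = plen x P + x (a,b)"
        unfolding plen_def using ne la nin by (simp add: pe_snoc pe_finite)
      then show ?thesis using dd_le_path[OF x Q parQ] z by simp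
    qed
  qed auto
  then show ?thesis by simp
qed


lemma rounding:
  assumes dag: "dag V E" and sV: "s \<in> V" and c: "\<forall>e\<in>E. c e \<ge> 0"
    and feas: "opb_feasible V E s t x"
  shows "\<exists>y. opb_integral V E s t y \<and> lp_cost E c y \<le> 2 * lp_cost E c x"
proof -
  have x: "\<forall>e\<in>E. x e \<ge> 0" using feas by (simp add: opb_feasible_def)
  have finE: "finite E" using dag unfolding dag_def by (meson finite_SigmaI finite_subset)
  define d where "d = dd V E s x"
  define F where "F \<theta> = {e\<in>E. \<exists>p. d (fst e) p < \<theta> \<and> \<theta> \<le> d (snd e) (\<not>p)}" for \<theta>
  define y where "y \<theta> e = (if e \<in> F \<theta> then 1 else (0::real))" for \<theta> e
  have integ: "opb_integral V E s t (y \<theta>)" if th: "0 < \<theta>" "\<theta> \<le> 1" for \<theta>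
    unfolding opb_integral_def opb_feasible_def
  proof (intro conjI allI impI ballI)
    fix P assume P: "odd_st_path V E s t P"
    define k where "k = length P - 1"
    define f where "f i = d (P!i) (odd i)" for i
    have ne: "P \<noteq> []" and hd: "hd P = s" and la: "last P = t" and pe: "path_edges P \<subseteq> E"
      and ok: "odd k"
      using P by (auto simp: odd_st_path_def is_st_path_def k_def)
    have "f 0 \<le> 0" using dd_s[OF x sV] hd ne by (simp add: f_def d_def hd_conv_nth)
    then have f0: "f 0 < \<theta>" using th by simp
    have "f k \<ge> 1" using dd_t[OF feas] la ne ok by (simp add: f_def d_def last_conv_nth k_def)
    then have fk: "\<theta> \<le> f k" using th by simp
    obtain i where i: "i < k" "f i < \<theta>" "\<theta> \<le> f (Suc i)" using cross[OF f0 fk] by blast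
    have ein: "(P!i, P!Suc i) \<in> path_edges P" using i(1) ne by (intro nth_edge) (simp add: k_def)
    then have "(P!i, P!Suc i) \<in> F \<theta>" using pe i unfolding F_def f_def by auto
    then have "y \<theta> (P!i, P!Suc i) = 1" by (simp add: y_def)
    moreover have "y \<theta> (P!i, P!Suc i) \<le> (\<Sum>e\<in>path_edges P. y \<theta> e)"
      by (rule member_le_sum[OF ein]) (auto simp: y_def pe_finite)
    ultimately show "1 \<le> (\<Sum>e\<in>path_edges P. y \<theta> e)" by simp
  qed (auto simp: y_def)
  define cost where "cost \<theta> = lp_cost E c (y \<theta>)" for \<theta>
  have cost_eq: "cost \<theta> = sum c (E \<inter> F \<theta>)" for \<theta>
    unfolding cost_def lp_cost_def using finE
    by (simp add: sum.inter_restrict y_def if_distrib cong: if_cong)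
  define S where "S = cost ` {0<..1}"
  have finS: "finite S"
  proof (rule finite_subset)
    show "S \<subseteq> sum c ` Pow E" unfolding S_def using cost_eq by auto
  qed (use finE in auto)
  have neS: "S \<noteq> {}" unfolding S_def by auto
  obtain \<theta>0 where th0: "\<theta>0 \<in> {0<..1}" "cost \<theta>0 = Min S"
    using Min_in[OF finS neS] unfolding S_def by auto
  have minc: "cost \<theta>0 \<le> cost \<theta>" if "\<theta> \<in> {0<..1}" for \<theta>
    using th0 Min_le[OF finS] that unfolding S_def by auto
  define I where "I e p = {d (fst e) p <.. d (snd e) (\<not>p)}" for e p
  define g where "g \<theta> = (\<Sum>e\<in>E. c e * (indicator (I e False) \<theta> + indicator (I e True) \<theta>))" for \<theta> :: real
  have gnn: "0 \<le> g \<theta>" for \<theta>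
    unfolding g_def using c by (intro sum_nonneg) auto
  have costg: "cost \<theta> \<le> g \<theta>" for \<theta>
    unfolding cost_def lp_cost_def g_def
  proof (rule sum_mono)
    fix e assume e: "e \<in> E"
    have "y \<theta> e \<le> indicator (I e False) \<theta> + indicator (I e True) \<theta>"
    proof (cases "e \<in> F \<theta>")
      case True
      then obtain p where "d (fst e) p < \<theta>" "\<theta> \<le> d (snd e) (\<not>p)" unfolding F_def by auto
      then have "\<theta> \<in> I e p" unfolding I_def by auto
      then show ?thesis using True by (cases p) (auto simp: y_def indicator_def)
    qed (auto simp: y_def)
    then show "c e * y \<theta> e \<le> c e * (indicator (I e False) \<theta> + indicator (I e True) \<theta>)"
      using c e by (intro mult_left_mono) auto
  qed
  have pw: "cost \<theta>0 * indicator {0<..1} \<theta> \<le> g \<theta>" for \<theta> :: real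
    using minc[of \<theta>] costg[of \<theta>] gnn[of \<theta>] by (auto simp: indicator_def)
  have intI: "integrable lborel (indicator (I e p) :: real \<Rightarrow> real)" for e p
    unfolding I_def by (intro integrable_real_indicator fin_Ioc) auto
  have intg: "integrable lborel g"
    unfolding g_def using intI by auto
  have int1: "integrable lborel (\<lambda>\<theta>::real. cost \<theta>0 * indicator {0<..1} \<theta>)"
    using fin_Ioc[of 0 1] by (intro integrable_mult_right integrable_real_indicator) auto
  have "cost \<theta>0 = (LINT \<theta>|lborel. cost \<theta>0 * indicator {0<..1::real} \<theta>)"
    by simp
  also have "\<dots> \<le> (LINT \<theta>|lborel. g \<theta>)"
    by (rule integral_mono[OF int1 intg pw])
  also have "\<dots> = (\<Sum>e\<in>E. c e * (measure lborel (I e False) + measure lborel (I e True)))"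
    unfolding g_def using intI by (simp add: integral_sum integral_add)
  also have "\<dots> \<le> (\<Sum>e\<in>E. c e * (2 * x e))"
  proof (rule sum_mono)
    fix e assume e: "e \<in> E"
    obtain a b where ab: "e = (a,b)" by force
    have "measure lborel (I e p) \<le> x e" for p
    proof -
      have "measure lborel (I e p) \<le> max 0 (d b (\<not>p) - d a p)"
        unfolding I_def ab by (simp add: meas_Ioc)
      also have "\<dots> \<le> x e" using dd_tri[OF dag x, of a b s p] e ab x by (auto simp: d_def)
      finally show ?thesis .
    qed
    from this[of False] this[of True]
    show "c e * (measure lborel (I e False) + measure lborel (I e True)) \<le> c e * (2 * x e)"
      using c e by (intro mult_left_mono) auto
  qed
  also have "\<dots> = 2 * lp_cost E c x" unfolding lp_cost_def
    by (simp add: sum_distrib_left algebra_simps)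
  finally show ?thesis using integ[of \<theta>0] th0(1) unfolding cost_def by auto
qed


theorem corollary3p6:
  fixes V :: "'a set" and E :: "('a \<times> 'a) set" and s t :: 'a
    and c :: "('a \<times> 'a) \<Rightarrow> real"
  assumes "dag V E" and "s \<in> V" and "t \<in> V" and "s \<noteq> t"
    and "\<forall>e\<in>E. c e \<ge> 0"
  shows "opb_int_opt V E s t c \<le> 2 * opb_lp_opt V E s t c"
proof -
  have bdd: "bdd_below {lp_cost E c x | x. opb_integral V E s t x}"
    using assms(5) by (intro bdd_belowI[of _ 0])
      (auto simp: lp_cost_def opb_integral_def opb_feasible_def intro!: sum_nonneg mult_nonneg_nonneg)
  have one: "opb_feasible V E s t (\<lambda>_. 1)"
    unfolding opb_feasible_def
  proof (intro conjI allI impI ballI)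
    fix P assume P: "odd_st_path V E s t P"
    then obtain a b r where "P = a # b # r"
      unfolding odd_st_path_def by (cases P; cases "tl P") auto
    then have "path_edges P \<noteq> {}" by (simp add: pe_cons2)
    then show "1 \<le> (\<Sum>e\<in>path_edges P. (1::real))" using pe_finite[of P]
      by (simp add: Suc_leI card_gt_0_iff)
  qed auto
  have "opb_int_opt V E s t c / 2 \<le> opb_lp_opt V E s t c"
    unfolding opb_lp_opt_def
  proof (rule cInf_greatest)
    show "{lp_cost E c x |x. opb_feasible V E s t x} \<noteq> {}" using one by auto
  next
    fix z assume "z \<in> {lp_cost E c x |x. opb_feasible V E s t x}"
    then obtain x where z: "z = lp_cost E c x" and f: "opb_feasible V E s t x" by auto
    obtain y where y: "opb_integral V E s t y" "lp_cost E c y \<le> 2 * z"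
      using rounding[OF assms(1,2,5) f] z by auto
    have "opb_int_opt V E s t c \<le> lp_cost E c y"
      unfolding opb_int_opt_def by (rule cInf_lower[OF _ bdd]) (use y in auto)
    then show "opb_int_opt V E s t c / 2 \<le> z" using y by simp
  qed
  then show ?thesis by simp
qed

end
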